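(* Let $n\ge 2$, let $X_2,\ldots,X_n$ be independent and uniformly distributed on $\{0,1\}$, and let $X_1=1-\prod_{i=2}^n X_i$. Then (a) $X_1,\ldots,X_n$ satisfy negative regression; and (b) for $f(X)=\sum_{i=1}^n X_i$ and $Y_k=\mathbb{E}[f(X)\mid X_1,\ldots,X_k]$, we have $Y_0=\frac{n+1}{2}-\frac{1}{2^{n-1}}$, and on the event $\{X_1=0\}$, which has probability $2^{-(n-1)}$, $Y_1=n-1$; in particular $Y_1-Y_0=\frac{n-3}{2}+\frac{1}{2^{n-1}}$ on this event.
   Context: For $S\subseteq[n]$, $X_S\in\{0,1\}^S$ denotes the tuple $(X_i)_{i\in S}$. The variables $X_1,\ldots,X_n$ satisfy negative regression if for all disjoint $I,J\subseteq[n]$, every non-decreasing function $g:\{0,1\}^I\to\mathbb{R}$, and all $a\le b$ in $\{0,1\}^J$ (coordinatewise) such that $\Pr[X_J=a]>0$ and $\Pr[X_J=b]>0$, we have $\mathbb{E}[g(X_I)\mid X_J=a]\ge \mathbb{E}[g(X_I)\mid X_J=b]$. *)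

theory Defs
  imports "HOL-Probability.Probability"
begin

definition cond_expect :: "'w pmf \<Rightarrow> 'w set \<Rightarrow> ('w \<Rightarrow> real) \<Rightarrow> real" where
  "cond_expect M A h = measure_pmf.expectation (cond_pmf M A) h"

(* For S a set of indices,
  X_S is represented by restrict (X w) S, an element of S ->E {0,1}. *)
definition neg_regression :: "nat \<Rightarrow> 'w pmf \<Rightarrow> ('w \<Rightarrow> nat \<Rightarrow> nat) \<Rightarrow> bool" where
  "neg_regression n M X \<longleftrightarrow>
     (\<forall>I J (g :: (nat \<Rightarrow> nat) \<Rightarrow> real) a b.
        I \<subseteq> {1..n} \<longrightarrow> J \<subseteq> {1..n} \<longrightarrow> I \<inter> J = {} \<longrightarrow>
        monotone_on (I \<rightarrow>\<^sub>E {0,1}) (\<le>) (\<le>) g \<longrightarrow>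
        a \<in> J \<rightarrow>\<^sub>E {0,1} \<longrightarrow> b \<in> J \<rightarrow>\<^sub>E {0,1} \<longrightarrow> a \<le> b \<longrightarrow>
        measure_pmf.prob M {\<omega>. restrict (X \<omega>) J = a} > 0 \<longrightarrow>
        measure_pmf.prob M {\<omega>. restrict (X \<omega>) J = b} > 0 \<longrightarrow>
        cond_expect M {\<omega>. restrict (X \<omega>) J = a} (\<lambda>\<omega>. g (restrict (X \<omega>) I))
        \<ge> cond_expect M {\<omega>. restrict (X \<omega>) J = b} (\<lambda>\<omega>. g (restrict (X \<omega>) I)))"

(* The probability space: (X_2,...,X_n) uniform on {0,1}^{2..n}, i.e. independent uniform bits. *)
definition bits_pmf :: "nat \<Rightarrow> (nat \<Rightarrow> nat) pmf" where
  "bits_pmf n = pmf_of_set ({2..n} \<rightarrow>\<^sub>E {0,1})"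

definition Xv :: "nat \<Rightarrow> (nat \<Rightarrow> nat) \<Rightarrow> nat \<Rightarrow> nat" where
  "Xv n \<omega> i = (if i = 1 then 1 - (\<Prod>j\<in>{2..n}. \<omega> j) else \<omega> i)"

definition doob :: "'w pmf \<Rightarrow> ('w \<Rightarrow> nat \<Rightarrow> nat) \<Rightarrow> ('w \<Rightarrow> real) \<Rightarrow> nat \<Rightarrow> 'w \<Rightarrow> real" where
  "doob M X h k \<omega> = cond_expect M {\<omega>'. \<forall>i\<in>{1..k}. X \<omega>' i = X \<omega> i} h"

end

theory Submission imports Defs begin

lemma cond_expect_pmf_of_set:
  assumes "finite S" "S \<inter> A \<noteq> {}"
  shows "cond_expect (pmf_of_set S) A h = sum h (S \<inter> A) / card (S \<inter> A)"
proof -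
  have S: "S \<noteq> {}" using assms by auto
  have ne: "set_pmf (pmf_of_set S) \<inter> A \<noteq> {}" using assms S by simp
  have "cond_pmf (pmf_of_set S) A = pmf_of_set (S \<inter> A)"
  proof (rule pmf_eqI)
    fix x
    have c: "card S > 0" using assms S by (simp add: card_gt_0_iff)
    have c2: "card (S \<inter> A) > 0" using assms by (simp add: card_gt_0_iff)
    show "pmf (cond_pmf (pmf_of_set S) A) x = pmf (pmf_of_set (S \<inter> A)) x"
      using c c2 assms S
      by (auto simp: pmf_cond[OF ne] measure_pmf_of_set indicator_def)
  qed
  then show ?thesis unfolding cond_expect_def using assms
    by (simp add: integral_pmf_of_set)
qed

lemma bij_avg:
  fixes h :: "'a \<Rightarrow> real"
  assumes "bij_betw \<phi> A B" "finite A" "\<forall>x\<in>A. h (\<phi> x) \<le> h x"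
  shows "sum h B / card B \<le> sum h A / card A"
proof -
  have "sum h B = sum (\<lambda>x. h (\<phi> x)) A" using sum.reindex_bij_betw[OF assms(1), of h] by simp
  moreover have "card B = card A" using bij_betw_same_card[OF assms(1)] by simp
  moreover have "sum (\<lambda>x. h (\<phi> x)) A \<le> sum h A" using assms(3) by (simp add: sum_mono)
  ultimately show ?thesis by (simp add: divide_right_mono)
qed

lemma bound_avg:
  fixes h :: "'a \<Rightarrow> real"
  assumes "finite S" "S \<noteq> {}" "\<forall>x\<in>S. h x \<le> c"
  shows "sum h S / card S \<le> c"
proof -
  have "sum h S \<le> of_nat (card S) * c" using assms(3) sum_bounded_above by metis
  moreover have "card S > 0" using assms by (simp add: card_gt_0_iff)
  ultimately show ?thesis by (simp add: pos_divide_le_eq mult.commute)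
qed

lemma remove_max_avg:
  fixes h :: "'a \<Rightarrow> real"
  assumes "finite A" "t \<in> A" "A - {t} \<noteq> {}" "\<forall>x\<in>A. h x \<le> h t"
  shows "sum h (A - {t}) / card (A - {t}) \<le> sum h A / card A"
proof -
  define s where "s = sum h (A - {t})"
  define m where "m = real (card (A - {t}))"
  have sA: "sum h A = h t + s" unfolding s_def using sum.remove[OF assms(1,2)] by simp
  have "card A = Suc (card (A - {t}))" using card_Suc_Diff1[OF assms(1,2)] by simp
  then have cA: "real (card A) = m + 1" unfolding m_def by simp
  have "card (A - {t}) > 0" using assms(1,3) card_gt_0_iff finite_Diff by blast
  then have mpos: "m > 0" unfolding m_def by simp
  have sle: "s \<le> m * h t" unfolding s_def m_def
    using sum_bounded_above[of "A - {t}" h "h t"] assms(4) by auto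
  have "s / m \<le> (h t + s) / (m + 1)"
  proof -
    have "s * (m + 1) \<le> (h t + s) * m" using sle by (simp add: algebra_simps)
    then show ?thesis using mpos by (simp add: divide_simps)
  qed
  then show ?thesis using sA cA by (simp add: s_def m_def)
qed

lemma Xv_T1: "Xv n (restrict (\<lambda>_. 1) {2..n}) 1 = 0"
  by (simp add: Xv_def)

lemma Xv_other:
  assumes "\<omega> \<in> {2..n} \<rightarrow>\<^sub>E {0,1::nat}" "\<omega> \<noteq> restrict (\<lambda>_. 1) {2..n}"
  shows "Xv n \<omega> 1 = 1"
proof -
  have "\<exists>j\<in>{2..n}. \<omega> j \<noteq> 1"
  proof (rule ccontr)
    assume "\<not> ?thesis"
    then have "\<forall>j\<in>{2..n}. \<omega> j = 1" by blast
    then have "\<omega> = restrict (\<lambda>_. 1) {2..n}" using assms(1)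
      by (auto simp: fun_eq_iff PiE_def extensional_def)
    then show False using assms(2) by simp
  qed
  then obtain j where j: "j \<in> {2..n}" "\<omega> j \<noteq> 1" by blast
  then have "\<omega> j = 0" using assms(1) by (auto simp: PiE_def)
  then have *: "(\<Prod>i\<in>{2..n}. \<omega> i) = 0" using j(1) by (meson finite_atLeastAtMost prod_zero)
  have eq: "Xv n \<omega> 1 = 1 - (\<Prod>i\<in>{2..n}. \<omega> i)" by (simp add: Xv_def)
  show ?thesis by (metis eq * diff_zero)
qed

lemma Xv_01:
  assumes "\<omega> \<in> {2..n} \<rightarrow>\<^sub>E {0,1::nat}" "i \<in> {1..n}"
  shows "Xv n \<omega> i \<in> {0,1}"
proof (cases "i = 1")
  case True
  then show ?thesis by (auto simp: Xv_def)
next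
  case False
  then show ?thesis using assms by (auto simp: Xv_def PiE_def)
qed

lemma negreg: "neg_regression n (bits_pmf n) (Xv n)"
  unfolding neg_regression_def
proof (intro allI impI)
  fix I J and g :: "(nat \<Rightarrow> nat) \<Rightarrow> real" and a b :: "nat \<Rightarrow> nat"
  assume I: "I \<subseteq> {1..n}" and J: "J \<subseteq> {1..n}" and IJ: "I \<inter> J = {}"
    and g: "monotone_on (I \<rightarrow>\<^sub>E {0,1}) (\<le>) (\<le>) g"
    and a: "a \<in> J \<rightarrow>\<^sub>E {0,1}" and b: "b \<in> J \<rightarrow>\<^sub>E {0,1}" and ab: "a \<le> b"
    and pa: "measure_pmf.prob (bits_pmf n) {\<omega>. restrict (Xv n \<omega>) J = a} > 0"
    and pb: "measure_pmf.prob (bits_pmf n) {\<omega>. restrict (Xv n \<omega>) J = b} > 0"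
  define \<Omega> where "\<Omega> = {2..n} \<rightarrow>\<^sub>E {0,1::nat}"
  define T where "T = restrict (\<lambda>_. 1::nat) {2..n}"
  define h where "h \<omega> = g (restrict (Xv n \<omega>) I)" for \<omega>
  define A where "A c = {\<omega>. restrict (Xv n \<omega>) J = c}" for c
  define J' where "J' = J - {1}"
  define C where "C c = {\<omega>\<in>\<Omega>. \<forall>i\<in>J'. \<omega> i = c i}" for c :: "nat \<Rightarrow> nat"
  have fin: "finite \<Omega>" unfolding \<Omega>_def by (simp add: finite_PiE)
  have T\<Omega>: "T \<in> \<Omega>" unfolding T_def \<Omega>_def by auto
  have J': "J' \<subseteq> {2..n}" using J unfolding J'_def by auto
  have bits: "bits_pmf n = pmf_of_set \<Omega>" unfolding bits_pmf_def \<Omega>_def ..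
  have ne: "\<Omega> \<inter> A c \<noteq> {}" if "measure_pmf.prob (bits_pmf n) (A c) > 0" for c
  proof
    assume e: "\<Omega> \<inter> A c = {}"
    have "\<Omega> \<noteq> {}" using T\<Omega> by auto
    from measure_pmf_of_set[OF this fin, of "A c"] e that show False unfolding bits by simp
  qed
  have neA: "\<Omega> \<inter> A a \<noteq> {}" "\<Omega> \<inter> A b \<noteq> {}" using ne pa pb unfolding A_def by auto
  have red: "sum h (\<Omega> \<inter> A b) / card (\<Omega> \<inter> A b) \<le> sum h (\<Omega> \<inter> A a) / card (\<Omega> \<inter> A a)"
  proof -
    have memA: "\<omega> \<in> A c \<longleftrightarrow> (\<forall>i\<in>J'. \<omega> i = c i) \<and> (1 \<in> J \<longrightarrow> Xv n \<omega> 1 = c 1)"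
      if c: "c \<in> J \<rightarrow>\<^sub>E {0,1}" for c \<omega>
    proof -
      have "\<omega> \<in> A c \<longleftrightarrow> (\<forall>i\<in>J. Xv n \<omega> i = c i)"
        using c unfolding A_def by (auto simp: fun_eq_iff PiE_def extensional_def restrict_def)
      also have "\<dots> \<longleftrightarrow> (\<forall>i\<in>J'. \<omega> i = c i) \<and> (1 \<in> J \<longrightarrow> Xv n \<omega> 1 = c 1)"
        unfolding J'_def by (auto simp: Xv_def)
      finally show ?thesis .
    qed
    define \<phi> where "\<phi> \<omega> = (\<lambda>i. if i \<in> J' then b i else \<omega> i)" for \<omega> :: "nat \<Rightarrow> nat"
    define \<psi> where "\<psi> \<omega> = (\<lambda>i. if i \<in> J' then a i else \<omega> i)" for \<omega> :: "nat \<Rightarrow> nat"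
    have a01: "a i \<in> {0,1}" "b i \<in> {0,1}" if "i \<in> J" for i using a b that by auto
    have bij: "bij_betw \<phi> (C a) (C b)"
    proof (rule bij_betw_byWitness[where f' = \<psi>])
      show "\<forall>x\<in>C a. \<psi> (\<phi> x) = x" unfolding C_def \<phi>_def \<psi>_def by auto
      show "\<forall>x\<in>C b. \<phi> (\<psi> x) = x" unfolding C_def \<phi>_def \<psi>_def by auto
      have upd: "(\<lambda>i. if i \<in> J' then c i else x i) \<in> \<Omega>"
        if "x \<in> \<Omega>" "\<forall>i\<in>J'. c i \<in> {0,1}" for x c :: "nat \<Rightarrow> nat"
        using that J' unfolding \<Omega>_def PiE_iff extensional_def by auto
      have aJ': "\<forall>i\<in>J'. a i \<in> {0,1}" "\<forall>i\<in>J'. b i \<in> {0,1}" using a01 unfolding J'_def by auto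
      show "\<phi> ` C a \<subseteq> C b"
      proof
        fix y assume "y \<in> \<phi> ` C a"
        then obtain x where x: "x \<in> C a" "y = \<phi> x" by blast
        have "x \<in> \<Omega>" using x(1) unfolding C_def by blast
        then have "y \<in> \<Omega>" using upd[of x b] aJ' x(2) unfolding \<phi>_def by simp
        then show "y \<in> C b" unfolding C_def x(2) \<phi>_def using x(2) \<phi>_def by simp
      qed
      show "\<psi> ` C b \<subseteq> C a"
      proof
        fix y assume "y \<in> \<psi> ` C b"
        then obtain x where x: "x \<in> C b" "y = \<psi> x" by blast
        have "x \<in> \<Omega>" using x(1) unfolding C_def by blast
        then have "y \<in> \<Omega>" using upd[of x a] aJ' x(2) unfolding \<psi>_def by simp
        then show "y \<in> C a" unfolding C_def x(2) \<psi>_def using x(2) \<psi>_def by simp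
      qed
    qed
    have finC: "finite (C c)" for c unfolding C_def using fin by simp
    have hmono: "\<forall>x\<in>C a. h (\<phi> x) \<le> h x"
    proof
      fix \<omega> assume \<omega>: "\<omega> \<in> C a"
      have \<phi>\<omega>: "\<phi> \<omega> \<in> \<Omega>" using bij \<omega> unfolding bij_betw_def C_def by auto
      have \<omega>\<Omega>: "\<omega> \<in> \<Omega>" using \<omega> unfolding C_def by auto
      have prodle: "(\<Prod>j\<in>{2..n}. \<omega> j) \<le> (\<Prod>j\<in>{2..n}. \<phi> \<omega> j)"
      proof (rule prod_mono, rule conjI)
        fix j assume "j \<in> {2..n}"
        show "\<omega> j \<le> \<phi> \<omega> j"
          using \<omega> ab unfolding C_def \<phi>_def by (auto simp: le_fun_def)
      qed simp
      have le: "restrict (Xv n (\<phi> \<omega>)) I \<le> restrict (Xv n \<omega>) I"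
        unfolding le_fun_def
      proof
        fix i show "restrict (Xv n (\<phi> \<omega>)) I i \<le> restrict (Xv n \<omega>) I i"
        proof (cases "i \<in> I")
          case True
          then have "i \<notin> J'" using IJ unfolding J'_def by auto
          then show ?thesis using True prodle unfolding Xv_def \<phi>_def by auto
        qed simp
      qed
      have mem: "restrict (Xv n x) I \<in> I \<rightarrow>\<^sub>E {0,1}" if "x \<in> \<Omega>" for x
      proof -
        have "\<forall>i\<in>I. Xv n x i \<in> {0,1}" using Xv_01[of x n] that I unfolding \<Omega>_def by blast
        then show ?thesis by (simp add: restrict_PiE_iff)
      qed
      show "h (\<phi> \<omega>) \<le> h \<omega>" unfolding h_def
        using g mem[OF \<phi>\<omega>] mem[OF \<omega>\<Omega>] le unfolding monotone_on_def by blast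
    qed
    have mem: "restrict (Xv n x) I \<in> I \<rightarrow>\<^sub>E {0,1}" if "x \<in> \<Omega>" for x
    proof -
      have "\<forall>i\<in>I. Xv n x i \<in> {0,1}" using Xv_01[of x n] that I unfolding \<Omega>_def by blast
      then show ?thesis by (simp add: restrict_PiE_iff)
    qed
    show ?thesis
    proof (cases "a = b")
      case True then show ?thesis by simp
    next
      case anb: False
      show ?thesis
      proof (cases "1 \<in> J")
        case False
        then have "\<Omega> \<inter> A c = C c" if "c \<in> J \<rightarrow>\<^sub>E {0,1}" for c
          using memA[OF that] unfolding C_def by auto
        then show ?thesis using bij_avg[OF bij finC hmono] a b by simp
      next
        case True
        then have oneI: "1 \<notin> I" using IJ by auto
        have hT: "\<forall>x\<in>\<Omega>. h x \<le> h T"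
        proof
          fix x assume x: "x \<in> \<Omega>"
          have le: "restrict (Xv n x) I \<le> restrict (Xv n T) I"
            unfolding le_fun_def
          proof
            fix i show "restrict (Xv n x) I i \<le> restrict (Xv n T) I i"
            proof (cases "i \<in> I")
              case True
              then have "i \<in> {1..n}" "i \<noteq> 1" using oneI I by auto
              then have i: "i \<in> {2..n}" by auto
              then have "x i \<in> {0,1}" using x unfolding \<Omega>_def by auto
              then show ?thesis using True i oneI unfolding Xv_def T_def by auto
            qed simp
          qed
          show "h x \<le> h T" unfolding h_def
            using g mem[OF x] mem[OF T\<Omega>] le unfolding monotone_on_def by blast
        qed
        have a1: "a 1 \<in> {0,1}" "b 1 \<in> {0,1}" "a 1 \<le> b 1"
          using a01 True ab by (auto simp: le_fun_def)
        have XT: "\<omega> \<in> \<Omega> \<Longrightarrow> Xv n \<omega> 1 = (if \<omega> = T then 0 else 1)" for \<omega>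
          using Xv_T1[of n] Xv_other[of \<omega> n] unfolding T_def \<Omega>_def by auto
        show ?thesis
        proof (cases "a 1 = 0")
          case True
          have "\<Omega> \<inter> A a \<subseteq> {T}"
            using memA[OF a] XT True \<open>1 \<in> J\<close> by (auto split: if_splits)
          then have eq: "\<Omega> \<inter> A a = {T}" using neA(1) by blast
          have "sum h (\<Omega> \<inter> A b) / card (\<Omega> \<inter> A b) \<le> h T"
            using bound_avg[of "\<Omega> \<inter> A b" h "h T"] fin neA(2) hT by auto
          then show ?thesis using eq by simp
        next
          case False
          then have a11: "a 1 = 1" "b 1 = 1" using a1 by auto
          have AC: "\<Omega> \<inter> A c = C c - {T}" if "c \<in> J \<rightarrow>\<^sub>E {0,1}" "c 1 = 1" for c
            using memA[OF that(1)] XT that(2) \<open>1 \<in> J\<close> unfolding C_def by auto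
          have TnCa: "T \<notin> C a"
          proof
            assume "T \<in> C a"
            then have "\<forall>i\<in>J'. T i = a i" unfolding C_def by auto
            moreover have "\<forall>i\<in>J'. T i = 1" using J' unfolding T_def by auto
            ultimately have Ta: "\<forall>i\<in>J'. a i = 1" by auto
            have "a = b"
            proof
              fix i
              show "a i = b i"
              proof (cases "i \<in> J")
                case True
                show ?thesis
                proof (cases "i = 1")
                  case True then show ?thesis using a11 by simp
                next
                  case False
                  then have "i \<in> J'" using \<open>i \<in> J\<close> unfolding J'_def by auto
                  moreover have "a i \<le> b i" using ab by (simp add: le_fun_def)
                  ultimately show ?thesis using Ta a01[OF \<open>i \<in> J\<close>] by force
                qed
              next
                case False
                then show ?thesis using a b by (auto simp: PiE_def extensional_def)
              qed
            qed
            then show False using anb by simp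
          qed
          have eqa: "\<Omega> \<inter> A a = C a" using AC[OF a a11(1)] TnCa by auto
          have eqb: "\<Omega> \<inter> A b = C b - {T}" using AC[OF b a11(2)] .
          have bijle: "sum h (C b) / card (C b) \<le> sum h (C a) / card (C a)"
            using bij_avg[OF bij finC hmono] .
          show ?thesis
          proof (cases "T \<in> C b")
            case True
            have "sum h (C b - {T}) / card (C b - {T}) \<le> sum h (C b) / card (C b)"
              using remove_max_avg[OF finC True] neA(2) eqb hT unfolding C_def by auto
            then show ?thesis using bijle unfolding eqa eqb by linarith
          next
            case False
            then show ?thesis using bijle eqa eqb by simp
          qed
        qed
      qed
    qed
  qed
  show "cond_expect (bits_pmf n) {\<omega>. restrict (Xv n \<omega>) J = a} (\<lambda>\<omega>. g (restrict (Xv n \<omega>) I))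
      \<ge> cond_expect (bits_pmf n) {\<omega>. restrict (Xv n \<omega>) J = b} (\<lambda>\<omega>. g (restrict (Xv n \<omega>) I))"
    using red neA fin unfolding bits A_def h_def by (simp add: cond_expect_pmf_of_set)
qed

theorem mainTheorem5:
  fixes n :: nat
  assumes "n \<ge> 2"
  defines "f \<equiv> (\<lambda>\<omega>. real (\<Sum>i\<in>{1..n}. Xv n \<omega> i))"
  shows "neg_regression n (bits_pmf n) (Xv n)
    \<and> (\<forall>\<omega>\<in>set_pmf (bits_pmf n).
         doob (bits_pmf n) (Xv n) f 0 \<omega> = (real n + 1) / 2 - 1 / 2 ^ (n - 1))
    \<and> measure_pmf.prob (bits_pmf n) {\<omega>. Xv n \<omega> 1 = 0} = 1 / 2 ^ (n - 1)
    \<and> (\<forall>\<omega>\<in>set_pmf (bits_pmf n). Xv n \<omega> 1 = 0 \<longrightarrow>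
         doob (bits_pmf n) (Xv n) f 1 \<omega> = real n - 1
         \<and> doob (bits_pmf n) (Xv n) f 1 \<omega> - doob (bits_pmf n) (Xv n) f 0 \<omega>
             = (real n - 3) / 2 + 1 / 2 ^ (n - 1))"
proof -
  define \<Omega> where "\<Omega> = {2..n} \<rightarrow>\<^sub>E {0,1::nat}"
  define T where "T = restrict (\<lambda>_. 1::nat) {2..n}"
  define N where "N = (2::real) ^ (n - 1)"
  have fin: "finite \<Omega>" unfolding \<Omega>_def by (simp add: finite_PiE)
  have T\<Omega>: "T \<in> \<Omega>" unfolding T_def \<Omega>_def by auto
  have bits: "bits_pmf n = pmf_of_set \<Omega>" unfolding bits_pmf_def \<Omega>_def ..
  have cardO: "real (card \<Omega>) = N"
  proof -
    have "card \<Omega> = (\<Prod>i\<in>{2..n}. card {0,1::nat})" unfolding \<Omega>_def by (simp add: card_PiE)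
    also have "\<dots> = 2 ^ (n - 1)" by (simp add: numeral_2_eq_2)
    finally show ?thesis unfolding N_def by simp
  qed
  have Npos: "N > 0" unfolding N_def by simp
  have XT: "\<omega> \<in> \<Omega> \<Longrightarrow> Xv n \<omega> 1 = (if \<omega> = T then 0 else 1)" for \<omega>
    using Xv_T1[of n] Xv_other[of \<omega> n] unfolding T_def \<Omega>_def by auto
  have fsplit: "f \<omega> = real (Xv n \<omega> 1) + (\<Sum>i\<in>{2..n}. real (\<omega> i))" for \<omega>
  proof -
    have "(\<Sum>i\<in>{1..n}. Xv n \<omega> i) = Xv n \<omega> 1 + (\<Sum>i\<in>{2..n}. Xv n \<omega> i)"
      using assms(1) sum.atLeast_Suc_atMost[of 1 n "Xv n \<omega>"] by (simp add: numeral_2_eq_2)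
    also have "(\<Sum>i\<in>{2..n}. Xv n \<omega> i) = (\<Sum>i\<in>{2..n}. \<omega> i)"
      by (rule sum.cong) (auto simp: Xv_def)
    finally show ?thesis unfolding f_def by simp
  qed
  have coord: "(\<Sum>\<omega>\<in>\<Omega>. real (\<omega> i)) = N / 2" if i: "i \<in> {2..n}" for i
  proof -
    define sg where "sg \<omega> = fun_upd \<omega> i (1 - \<omega> i)" for \<omega> :: "nat \<Rightarrow> nat"
    have le1: "\<omega> i \<le> 1" if "\<omega> \<in> \<Omega>" for \<omega> using PiE_mem[OF that[unfolded \<Omega>_def] i] by auto
    have inv: "sg (sg a) = a" if a: "a \<in> \<Omega>" for a
      using le1[OF a] unfolding sg_def by (auto simp: fun_eq_iff)
    have mem: "sg a \<in> \<Omega>" if a: "a \<in> \<Omega>" for a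
      using a i unfolding sg_def \<Omega>_def by (auto simp: PiE_iff extensional_def)
    have val: "real (sg a i) = 1 - real (a i)" if a: "a \<in> \<Omega>" for a
      using le1[OF a] unfolding sg_def by auto
    have "(\<Sum>\<omega>\<in>\<Omega>. 1 - real (\<omega> i)) = (\<Sum>\<omega>\<in>\<Omega>. real (\<omega> i))"
      by (rule sum.reindex_bij_witness[where i = sg and j = sg]) (auto simp: inv mem val)
    then have "real (card \<Omega>) - (\<Sum>\<omega>\<in>\<Omega>. real (\<omega> i)) = (\<Sum>\<omega>\<in>\<Omega>. real (\<omega> i))"
      by (simp add: sum_subtractf)
    then show ?thesis using cardO by simp
  qed
  have X1sum: "(\<Sum>\<omega>\<in>\<Omega>. real (Xv n \<omega> 1)) = N - 1"
  proof -
    have "(\<Sum>\<omega>\<in>\<Omega>. real (Xv n \<omega> 1)) = real (Xv n T 1) + (\<Sum>\<omega>\<in>\<Omega> - {T}. real (Xv n \<omega> 1))"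
      using sum.remove[OF fin T\<Omega>] by blast
    also have "(\<Sum>\<omega>\<in>\<Omega> - {T}. real (Xv n \<omega> 1)) = (\<Sum>\<omega>\<in>\<Omega> - {T}. 1)"
    proof (rule sum.cong)
      fix x assume "x \<in> \<Omega> - {T}"
      then have "Xv n x 1 = 1" using XT[of x] by auto
      then show "real (Xv n x 1) = 1" by simp
    qed simp
    also have "\<dots> = N - 1"
    proof -
      have "card \<Omega> > 0" using fin T\<Omega> by (auto simp: card_gt_0_iff)
      then have cpos: "card \<Omega> \<ge> 1" by simp
      have "card (\<Omega> - {T}) = card \<Omega> - 1" using fin T\<Omega> by (simp add: card_Diff_singleton)
      then show ?thesis using cardO cpos by (simp add: of_nat_diff)
    qed
    finally show ?thesis using XT[OF T\<Omega>] by simp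
  qed
  have fsum: "(\<Sum>\<omega>\<in>\<Omega>. f \<omega>) = (N - 1) + (real n - 1) * (N / 2)"
  proof -
    have "(\<Sum>\<omega>\<in>\<Omega>. f \<omega>) = (\<Sum>\<omega>\<in>\<Omega>. real (Xv n \<omega> 1)) + (\<Sum>i\<in>{2..n}. \<Sum>\<omega>\<in>\<Omega>. real (\<omega> i))"
      unfolding fsplit by (simp add: sum.distrib sum.swap[of _ \<Omega>])
    also have "(\<Sum>i\<in>{2..n}. \<Sum>\<omega>\<in>\<Omega>. real (\<omega> i)) = (\<Sum>i\<in>{2..n}. N / 2)"
      by (rule sum.cong) (auto simp: coord)
    also have "\<dots> = (real n - 1) * (N / 2)" using assms(1) by (simp add: of_nat_diff)
    finally show ?thesis using X1sum by simp
  qed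
  have doob0: "doob (bits_pmf n) (Xv n) f 0 \<omega> = (real n + 1) / 2 - 1 / N" for \<omega>
  proof -
    have "doob (bits_pmf n) (Xv n) f 0 \<omega> = cond_expect (pmf_of_set \<Omega>) UNIV f"
      unfolding doob_def bits by simp
    also have "\<dots> = (\<Sum>\<omega>\<in>\<Omega>. f \<omega>) / N"
      using cond_expect_pmf_of_set[OF fin, of UNIV f] T\<Omega> cardO by auto
    also have "\<dots> = (real n + 1) / 2 - 1 / N" unfolding fsum using Npos
      by (simp add: field_simps)
    finally show ?thesis .
  qed
  have ev: "\<Omega> \<inter> {\<omega>. Xv n \<omega> 1 = 0} = {T}" using XT T\<Omega> by (auto split: if_splits)
  have prob: "measure_pmf.prob (bits_pmf n) {\<omega>. Xv n \<omega> 1 = 0} = 1 / N"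
  proof -
    have "\<Omega> \<noteq> {}" using T\<Omega> by auto
    from measure_pmf_of_set[OF this fin, of "{\<omega>. Xv n \<omega> 1 = 0}"] show ?thesis
      unfolding bits ev using cardO by simp
  qed
  have doob1: "doob (bits_pmf n) (Xv n) f 1 \<omega> = real n - 1" if "\<omega> \<in> \<Omega>" "Xv n \<omega> 1 = 0" for \<omega>
  proof -
    have "doob (bits_pmf n) (Xv n) f 1 \<omega> = cond_expect (pmf_of_set \<Omega>) {\<omega>'. Xv n \<omega>' 1 = 0} f"
      unfolding doob_def bits using that by simp
    also have "\<dots> = f T" using cond_expect_pmf_of_set[OF fin, of "{\<omega>'. Xv n \<omega>' 1 = 0}" f] ev by simp
    also have "\<dots> = real n - 1"
    proof -
      have "(\<Sum>i\<in>{2..n}. real (T i)) = (\<Sum>i\<in>{2..n}. 1)" by (rule sum.cong) (auto simp: T_def)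
      then show ?thesis unfolding fsplit using XT[OF T\<Omega>] assms(1) by (simp add: of_nat_diff)
    qed
    finally show ?thesis .
  qed
  have One: "\<Omega> \<noteq> {}" using T\<Omega> by auto
  have setp: "set_pmf (bits_pmf n) = \<Omega>" unfolding bits using set_pmf_of_set[OF One fin] .
  have c2: "\<forall>\<omega>\<in>set_pmf (bits_pmf n).
         doob (bits_pmf n) (Xv n) f 0 \<omega> = (real n + 1) / 2 - 1 / 2 ^ (n - 1)"
    using doob0 unfolding N_def by simp
  have c3: "measure_pmf.prob (bits_pmf n) {\<omega>. Xv n \<omega> 1 = 0} = 1 / 2 ^ (n - 1)"
    using prob unfolding N_def .
  have c4: "\<forall>\<omega>\<in>set_pmf (bits_pmf n). Xv n \<omega> 1 = 0 \<longrightarrow>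
         doob (bits_pmf n) (Xv n) f 1 \<omega> = real n - 1
         \<and> doob (bits_pmf n) (Xv n) f 1 \<omega> - doob (bits_pmf n) (Xv n) f 0 \<omega>
             = (real n - 3) / 2 + 1 / 2 ^ (n - 1)"
  proof (intro ballI impI conjI)
    fix \<omega> assume w: "\<omega> \<in> set_pmf (bits_pmf n)" "Xv n \<omega> 1 = 0"
    then have d1: "doob (bits_pmf n) (Xv n) f 1 \<omega> = real n - 1" using doob1 setp by simp
    then show "doob (bits_pmf n) (Xv n) f 1 \<omega> = real n - 1" .
    have "real n - 1 - ((real n + 1) / 2 - 1 / N) = (real n - 3) / 2 + 1 / N"
      by (simp add: field_simps)
    then show "doob (bits_pmf n) (Xv n) f 1 \<omega> - doob (bits_pmf n) (Xv n) f 0 \<omega>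
             = (real n - 3) / 2 + 1 / 2 ^ (n - 1)"
      using d1 doob0[of \<omega>] unfolding N_def by simp
  qed
  show ?thesis using negreg[of n] c2 c3 c4 by blast
qed

end
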